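(* Let $Z$ be an abelian group, $K$ a group, and $\theta,\mu:K\times K\to Z$ loop cocycles such that $\nu(x,y)=\theta(x,y)\mu(x,y)^{-1}$ is a group cocycle. Then the left inner mappings of $K\ltimes_\theta Z$ and $K\ltimes_\mu Z$ coincide: for all $u,v,w\in K\times Z$, the element $(uv)\backslash(u(vw))$ computed in $K\ltimes_\theta Z$ equals the one computed in $K\ltimes_\mu Z$.
   Context: A loop cocycle is a map $\theta:K\times K\to Z$ with $\theta(x,1)=\theta(1,x)=1$ for all $x\in K$. It is a group cocycle if moreover $\theta(x,y)\theta(xy,z)=\theta(y,z)\theta(x,yz)$ for all $x,y,z\in K$. For a loop cocycle $\theta$, $K\ltimes_\theta Z$ is the loop on $K\times Z$ with multiplication $(x,a)(y,b)=(xy,\,ab\,\theta(x,y))$; $u\backslash w$ denotes the unique $z$ with $uz=w$. *)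

theory Defs
  imports Main
begin

text \<open>Convention: the group K is written additively via the class group_add
(not assumed commutative); the abelian group Z is written additively via ab_group_add.
So the identity 1 is 0, products are sums, and a b theta(x,y) becomes a + b + theta x y.\<close>

definition loop_cocycle :: "('k::group_add \<Rightarrow> 'k \<Rightarrow> 'z::ab_group_add) \<Rightarrow> bool" where
  "loop_cocycle \<theta> \<longleftrightarrow> (\<forall>x. \<theta> x 0 = 0 \<and> \<theta> 0 x = 0)"

definition group_cocycle :: "('k::group_add \<Rightarrow> 'k \<Rightarrow> 'z::ab_group_add) \<Rightarrow> bool" where
  "group_cocycle \<theta> \<longleftrightarrow> loop_cocycle \<theta> \<and>
     (\<forall>x y z. \<theta> x y + \<theta> (x + y) z = \<theta> y z + \<theta> x (y + z))"

definition cmult :: "('k::group_add \<Rightarrow> 'k \<Rightarrow> 'z::ab_group_add) \<Rightarrow> 'k \<times> 'z \<Rightarrow> 'k \<times> 'z \<Rightarrow> 'k \<times> 'z" where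
  "cmult \<theta> u v = (fst u + fst v, snd u + snd v + \<theta> (fst u) (fst v))"

definition cldiv :: "('k::group_add \<Rightarrow> 'k \<Rightarrow> 'z::ab_group_add) \<Rightarrow> 'k \<times> 'z \<Rightarrow> 'k \<times> 'z \<Rightarrow> 'k \<times> 'z" where
  "cldiv \<theta> u w = (THE z. cmult \<theta> u z = w)"

end

theory Submission
  imports Defs
begin

lemma cldiv_eq:
  "cldiv \<theta> u w = (- fst u + fst w, snd w - snd u - \<theta> (fst u) (- fst u + fst w))"
  unfolding cldiv_def
proof (rule the_equality)
  show "cmult \<theta> u (- fst u + fst w, snd w - snd u - \<theta> (fst u) (- fst u + fst w)) = w"
    by (simp add: cmult_def add.assoc[symmetric] prod_eq_iff)
next
  fix z assume h: "cmult \<theta> u z = w"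
  have 1: "fst z = - fst u + fst w" using h
    by (auto simp: cmult_def add.assoc[symmetric])
  have 2: "snd z = snd w - snd u - \<theta> (fst u) (fst z)" using h
    by (auto simp: cmult_def)
  show "z = (- fst u + fst w, snd w - snd u - \<theta> (fst u) (- fst u + fst w))"
    using 1 2 by (simp add: prod_eq_iff)
qed

lemma ab: fixes A B C D P Q R S :: "'z::ab_group_add"
  assumes "(A - P) + (B - Q) = (C - R) + (D - S)"
  shows "a + (b + c + C) + D - (a + b + A) - B = a + (b + c + R) + S - (a + b + P) - Q"
  using assms by (simp add: algebra_simps)

theorem lemma4p10:
  fixes \<theta> \<mu> :: "'k::group_add \<Rightarrow> 'k \<Rightarrow> 'z::ab_group_add"
  assumes "loop_cocycle \<theta>" and "loop_cocycle \<mu>"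
    and "group_cocycle (\<lambda>x y. \<theta> x y - \<mu> x y)"
  shows "\<forall>u v w. cldiv \<theta> (cmult \<theta> u v) (cmult \<theta> u (cmult \<theta> v w))
               = cldiv \<mu> (cmult \<mu> u v) (cmult \<mu> u (cmult \<mu> v w))"
proof (intro allI)
  fix u v w :: "'k \<times> 'z"
  obtain x a where u: "u = (x, a)" by fastforce
  obtain y b where v: "v = (y, b)" by fastforce
  obtain z c where w: "w = (z, c)" by fastforce
  have e: "- (x + y) + (x + (y + z)) = z"
    by (simp add: add.assoc[symmetric] minus_add)
  have co: "(\<theta> x y - \<mu> x y) + (\<theta> (x + y) z - \<mu> (x + y) z)
       = (\<theta> y z - \<mu> y z) + (\<theta> x (y + z) - \<mu> x (y + z))"
    using assms(3) unfolding group_cocycle_def by blast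
  show "cldiv \<theta> (cmult \<theta> u v) (cmult \<theta> u (cmult \<theta> v w))
               = cldiv \<mu> (cmult \<mu> u v) (cmult \<mu> u (cmult \<mu> v w))"
    unfolding u v w cldiv_eq cmult_def fst_conv snd_conv e
    using ab[OF co] by simp
qed

end
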